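(* Let $t^*$ maximize $u(t)$ over all tests $t\subseteq[n]$ with $|t|\le G$. Then for every $B\ge1$ and every testing regime $T\in\mathcal T^B$ (overlapping allowed), $u(T)\le B\cdot u(t^* )$.
   Context: Population $[n]$; individual $i$ is healthy with probability $q_i\in[0,1]$, independently, with utility $u_i\ge0$. For $S\subseteq[n]$, $q_S=\prod_{i\in S}q_i$. A test is a set $t\subseteq[n]$ with $|t|\le G$, negative iff all members are healthy; $u(t)=q_t\sum_{i\in t}u_i$. A testing regime is a tuple $T=(t_1,\dots,t_B)$ of tests; $\mathcal T^B$ is the set of all of them. Welfare $u(T)=\sum_iu_iP^T_i$, where $P^T_i$ is the probability that $i$ is in at least one negative test of $T$. *)

theory Defs
  imports "HOL-Analysis.Analysis"
begin

text \<open>Population is {..<n}. Individual i is healthy with probability q i, independently.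
  A health outcome is the set h of healthy individuals; its probability is below.\<close>

definition outcome_prob :: "nat \<Rightarrow> (nat \<Rightarrow> real) \<Rightarrow> nat set \<Rightarrow> real" where
  "outcome_prob n q h = (\<Prod>i\<in>h. q i) * (\<Prod>i\<in>{..<n} - h. 1 - q i)"

definition qS :: "(nat \<Rightarrow> real) \<Rightarrow> nat set \<Rightarrow> real" where
  "qS q S = (\<Prod>i\<in>S. q i)"

definition is_test :: "nat \<Rightarrow> nat \<Rightarrow> nat set \<Rightarrow> bool" where
  "is_test n G t \<longleftrightarrow> t \<subseteq> {..<n} \<and> card t \<le> G"

definition test_utility :: "(nat \<Rightarrow> real) \<Rightarrow> (nat \<Rightarrow> real) \<Rightarrow> nat set \<Rightarrow> real" where
  "test_utility q u t = qS q t * (\<Sum>i\<in>t. u i)"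

definition regimes :: "nat \<Rightarrow> nat \<Rightarrow> nat \<Rightarrow> nat set list set" where
  "regimes n G B = {T. length T = B \<and> (\<forall>t\<in>set T. is_test n G t)}"

text \<open>Probability that i lies in at least one negative test of T
  (a test is negative iff all its members are healthy, i.e. t is a subset of h).\<close>
definition P_in_neg :: "nat \<Rightarrow> (nat \<Rightarrow> real) \<Rightarrow> nat set list \<Rightarrow> nat \<Rightarrow> real" where
  "P_in_neg n q T i = (\<Sum>h\<in>Pow {..<n}.
      (if \<exists>t\<in>set T. i \<in> t \<and> t \<subseteq> h then outcome_prob n q h else 0))"

definition welfare :: "nat \<Rightarrow> (nat \<Rightarrow> real) \<Rightarrow> (nat \<Rightarrow> real) \<Rightarrow> nat set list \<Rightarrow> real" where
  "welfare n q u T = (\<Sum>i<n. u i * P_in_neg n q T i)"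

end

theory Submission
  imports Defs
begin

lemma key:
  assumes t: "t \<subseteq> {..<n}"
  shows "(\<Sum>h\<in>Pow {..<n}. if t \<subseteq> h then outcome_prob n q h else 0) = qS q t"
proof -
  define A where "A = {..<n} - t"
  have fin: "finite A" unfolding A_def by simp
  have "(\<Sum>h\<in>Pow {..<n}. if t \<subseteq> h then outcome_prob n q h else 0)
        = (\<Sum>h\<in>{h\<in>Pow {..<n}. t \<subseteq> h}. outcome_prob n q h)"
    by (subst sum.inter_filter) auto
  also have "{h\<in>Pow {..<n}. t \<subseteq> h} = (\<lambda>S. t \<union> S) ` Pow A"
  proof (rule set_eqI, rule iffI)
    fix h assume "h \<in> {h\<in>Pow {..<n}. t \<subseteq> h}"
    then have "h = t \<union> (h - t)" "h - t \<in> Pow A" unfolding A_def by auto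
    then show "h \<in> (\<lambda>S. t \<union> S) ` Pow A" by blast
  qed (use t A_def in auto)
  also have "(\<Sum>h\<in>(\<lambda>S. t \<union> S) ` Pow A. outcome_prob n q h)
      = (\<Sum>S\<in>Pow A. outcome_prob n q (t \<union> S))"
    by (rule sum.reindex_cong[where l="\<lambda>S. t \<union> S"])
       (auto simp: inj_on_def A_def)
  also have "\<dots> = (\<Sum>S\<in>Pow A. qS q t * ((\<Prod>i\<in>S. q i) * (\<Prod>i\<in>A - S. 1 - q i)))"
  proof (rule sum.cong[OF refl])
    fix S assume S: "S \<in> Pow A"
    have fS: "finite S" "finite t" using S fin t finite_subset by (auto intro: finite_subset)
    have d: "t \<inter> S = {}" using S A_def by auto
    have e: "{..<n} - (t \<union> S) = A - S" using A_def by auto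
    show "outcome_prob n q (t \<union> S) = qS q t * ((\<Prod>i\<in>S. q i) * (\<Prod>i\<in>A - S. 1 - q i))"
      unfolding outcome_prob_def qS_def e
      by (simp add: prod.union_disjoint[OF fS(2) fS(1) d] mult.assoc)
  qed
  also have "\<dots> = qS q t * (\<Prod>i\<in>A. q i + (1 - q i))"
    by (subst prod_add[OF fin]) (simp add: sum_distrib_left)
  also have "\<dots> = qS q t" by simp
  finally show ?thesis .
qed

lemma swap_sl: "(\<Sum>i\<in>A. \<Sum>t\<leftarrow>T. f i t) = (\<Sum>t\<leftarrow>T. \<Sum>i\<in>A. f i t)"
  by (induction T) (auto simp: sum.distrib)

lemma mem_le_sl:
  fixes f :: "'a \<Rightarrow> real"
  shows "x \<in> set xs \<Longrightarrow> (\<forall>y\<in>set xs. 0 \<le> f y) \<Longrightarrow> f x \<le> (\<Sum>y\<leftarrow>xs. f y)"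
  by (induction xs) (auto simp: add_increasing add_increasing2 intro!: sum_list_nonneg)

lemma op_nonneg:
  assumes "\<forall>i<n. 0 \<le> q i \<and> q i \<le> 1" "h \<subseteq> {..<n}"
  shows "0 \<le> outcome_prob n q h"
  unfolding outcome_prob_def using assms
  by (intro mult_nonneg_nonneg prod_nonneg) auto

lemma P_bound:
  assumes q01: "\<forall>i<n. 0 \<le> q i \<and> q i \<le> 1"
    and T: "\<forall>t\<in>set T. t \<subseteq> {..<n}"
  shows "P_in_neg n q T i \<le> (\<Sum>t\<leftarrow>T. if i \<in> t then qS q t else 0)"
proof -
  have "P_in_neg n q T i \<le> (\<Sum>h\<in>Pow {..<n}. (\<Sum>t\<leftarrow>T.
          if i \<in> t then (if t \<subseteq> h then outcome_prob n q h else 0) else 0))"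
    unfolding P_in_neg_def
  proof (rule sum_mono)
    fix h assume h: "h \<in> Pow {..<n}"
    have nn: "0 \<le> outcome_prob n q h" using op_nonneg[OF q01] h by auto
    show "(if \<exists>t\<in>set T. i \<in> t \<and> t \<subseteq> h then outcome_prob n q h else 0)
       \<le> (\<Sum>t\<leftarrow>T. if i \<in> t then (if t \<subseteq> h then outcome_prob n q h else 0) else 0)"
    proof (cases "\<exists>t\<in>set T. i \<in> t \<and> t \<subseteq> h")
      case True
      then obtain t where t: "t \<in> set T" "i \<in> t" "t \<subseteq> h" by blast
      have "outcome_prob n q h = (if i \<in> t then (if t \<subseteq> h then outcome_prob n q h else 0) else 0)"
        using t by simp
      also have "\<dots> \<le> (\<Sum>t\<leftarrow>T. if i \<in> t then (if t \<subseteq> h then outcome_prob n q h else 0) else 0)"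
        by (rule mem_le_sl[OF t(1)]) (simp add: nn)
      finally show ?thesis using True by simp
    next
      case False
      then show ?thesis by (auto simp: nn intro!: sum_list_nonneg)
    qed
  qed
  also have "\<dots> = (\<Sum>t\<leftarrow>T. \<Sum>h\<in>Pow {..<n}.
          if i \<in> t then (if t \<subseteq> h then outcome_prob n q h else 0) else 0)"
    by (rule swap_sl)
  also have "\<dots> = (\<Sum>t\<leftarrow>T. if i \<in> t then qS q t else 0)"
    by (rule arg_cong[where f=sum_list], rule map_cong[OF refl]) (use T key in auto)
  finally show ?thesis .
qed

theorem mainTheorem9:
  fixes n G B :: nat and q u :: "nat \<Rightarrow> real" and tstar :: "nat set" and T :: "nat set list"
  assumes q01: "\<forall>i<n. 0 \<le> q i \<and> q i \<le> 1"
    and u_nonneg: "\<forall>i<n. 0 \<le> u i"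
    and tstar_test: "is_test n G tstar"
    and tstar_max: "\<forall>t. is_test n G t \<longrightarrow> test_utility q u t \<le> test_utility q u tstar"
    and B1: "1 \<le> B"
    and T_regime: "T \<in> regimes n G B"
  shows "welfare n q u T \<le> real B * test_utility q u tstar"
proof -
  have len: "length T = B" and tests: "\<forall>t\<in>set T. is_test n G t"
    using T_regime by (auto simp: regimes_def)
  have Tsub: "\<forall>t\<in>set T. t \<subseteq> {..<n}" using tests by (auto simp: is_test_def)
  have "welfare n q u T \<le> (\<Sum>i<n. u i * (\<Sum>t\<leftarrow>T. if i \<in> t then qS q t else 0))"
    unfolding welfare_def
    by (rule sum_mono, rule mult_left_mono[OF P_bound[OF q01 Tsub]]) (use u_nonneg in auto)
  also have "\<dots> = (\<Sum>t\<leftarrow>T. \<Sum>i<n. u i * (if i \<in> t then qS q t else 0))"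
    by (simp add: sum_list_const_mult[symmetric] swap_sl)
  also have "\<dots> = (\<Sum>t\<leftarrow>T. test_utility q u t)"
  proof (rule arg_cong[where f=sum_list], rule map_cong[OF refl])
    fix t assume "t \<in> set T"
    then have ts: "t \<subseteq> {..<n}" using Tsub by auto
    have "(\<Sum>i<n. u i * (if i \<in> t then qS q t else 0)) = (\<Sum>i\<in>{..<n} \<inter> t. u i * qS q t)"
      by (subst sum.inter_restrict) (auto intro: sum.cong)
    also have "{..<n} \<inter> t = t" using ts by auto
    finally show "(\<Sum>i<n. u i * (if i \<in> t then qS q t else 0)) = test_utility q u t"
      by (simp add: test_utility_def sum_distrib_left mult_ac)
  qed
  also have "\<dots> \<le> (\<Sum>t\<leftarrow>T. test_utility q u tstar)"
    by (rule sum_list_mono) (use tests tstar_max in auto)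
  also have "\<dots> = real B * test_utility q u tstar"
    by (simp add: sum_list_triv len)
  finally show ?thesis .
qed

end
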